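(* Let $R$ be a blind bisimulation on the nodes of a $\lambda$-graph $G$. Let $n,m$ be nodes with $n\,R\,m$ and $\tau$ a trace such that the path $n\xrightarrow{\tau}$ crosses an abstraction node $l$ and the path $m\xrightarrow{\tau}$ crosses an abstraction node $l'$. Then $l\,R\,l'$ holds if and only if $\mathrm{idx}(l,n\xrightarrow{\tau})=\mathrm{idx}(l',m\xrightarrow{\tau})$.
   Context: A pre-$\lambda$-graph is a directed graph whose nodes are of four kinds: an application node $@(n_1,n_2)$ has exactly two children, its left child $n_1$ and its right child $n_2$; an abstraction node $\lambda(n)$ has exactly one child, its body $n$; a free variable node has no children and carries an atom $\mathrm{id}(n)$ from a fixed set of atoms, distinct free variable nodes carrying distinct atoms; a bound variable node $\mathrm{var}(l)$ has exactly one outgoing binding edge, to an abstraction node $l$ (its binder). Letters $l,l'$ denote abstraction nodes. A trace is a finite sequence of directions from $\{\swarrow,\downarrow,\searrow\}$; $\epsilon$ is the empty trace and $d\cdot\tau$ is the trace $\tau$ extended by one final step $d$. Paths $n\xrightarrow{\tau}m$ are defined inductively: $n\xrightarrow{\epsilon}n$; if $n\xrightarrow{\tau}\lambda(m)$ then $n\xrightarrow{\downarrow\cdot\tau}m$; if $n\xrightarrow{\tau}@(m_1,m_2)$ then $n\xrightarrow{\swarrow\cdot\tau}m_1$ and $n\xrightarrow{\searrow\cdot\tau}m_2$ (binding edges are never followed). We write $n\xrightarrow{\tau}$ if $n\xrightarrow{\tau}m$ for some $m$. The path $n\xrightarrow{\tau}$ crosses a node $m$ if either $n\xrightarrow{\tau}m$,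 or $\tau=d\cdot\tau'$ and $n\xrightarrow{\tau'}$ crosses $m$. A root is a node $r$ such that the only path ending in $r$ has the empty trace. A node $m$ dominates $n$ if every path from a root to $n$ crosses $m$. A $\lambda$-graph is a pre-$\lambda$-graph that has finitely many nodes, is acyclic ($n\xrightarrow{\tau}n$ holds only for $\tau=\epsilon$), and is dominated (every bound variable node $\mathrm{var}(l)$ is dominated by its binder $l$). Two nodes are homogeneous if both are application nodes, or both abstraction nodes, or both free variable nodes, or both bound variable nodes; a binary relation $R$ on nodes is homogeneous if it only relates homogeneous nodes. Rules: $(\swarrow)$: $@(n_1,n_2)\,R\,@(m_1,m_2)$ implies $n_1\,R\,m_1$; $(\searrow)$: $@(n_1,n_2)\,R\,@(m_1,m_2)$ implies $n_2\,R\,m_2$; $(\downarrow)$: $\lambda(n)\,R\,\lambda(m)$ implies $n\,R\,m$. $R$ is propagated if closed under $(\swarrow),(\downarrow),(\searrow)$. A blind bisimulation is a homogeneous propagated relation. For a path $n\xrightarrow{\tau}$ crossing an abstraction node $l$, the index $\mathrm{idx}(l,n\xrightarrow{\tau})$ is defined by induction on the crossing: it is $0$ if $n\xrightarrow{\tau}l$; for $n\xrightarrow{d\cdot\tau}l'$ with $l'$ an abstraction node different from $l$ it is $\mathrm{idx}(l,n\xrightarrow{\tau})+1$; for $n\xrightarrow{d\cdot\tau}m$ with $m$ not an abstraction node it is $\mathrm{idx}(l,n\xrightarrow{\tau})$. *)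

theory Defs
  imports Main
begin

text \<open>Node kinds: a node is labelled by its kind; children / binder are nodes of type 'n,
  free variables carry atoms of type 'a.\<close>
datatype ('n, 'a) kind = App 'n 'n | Abs 'n | FVar 'a | BVar 'n

datatype dir = SW | Down | SE

text \<open>A trace is a list of directions; the extension d\<cdot>\<tau> of \<tau> by a final step d is d # \<tau>.\<close>
type_synonym trace = "dir list"

text \<open>A pre-lambda-graph: node set N and labelling lab (only meaningful on N).\<close>
definition pre_lambda_graph :: "'n set \<Rightarrow> ('n \<Rightarrow> ('n, 'a) kind) \<Rightarrow> bool" where
  "pre_lambda_graph N lab \<longleftrightarrow>
     (\<forall>v\<in>N. \<forall>n1 n2. lab v = App n1 n2 \<longrightarrow> n1 \<in> N \<and> n2 \<in> N) \<and>
     (\<forall>v\<in>N. \<forall>b. lab v = Abs b \<longrightarrow> b \<in> N) \<and>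
     (\<forall>v\<in>N. \<forall>l. lab v = BVar l \<longrightarrow> l \<in> N \<and> (\<exists>b. lab l = Abs b)) \<and>
     (\<forall>v\<in>N. \<forall>w\<in>N. \<forall>x. lab v = FVar x \<and> lab w = FVar x \<longrightarrow> v = w)"

inductive path :: "'n set \<Rightarrow> ('n \<Rightarrow> ('n, 'a) kind) \<Rightarrow> 'n \<Rightarrow> trace \<Rightarrow> 'n \<Rightarrow> bool"
  for N lab where
  path_eps: "n \<in> N \<Longrightarrow> path N lab n [] n"
| path_down: "path N lab n \<tau> m \<Longrightarrow> lab m = Abs m' \<Longrightarrow> path N lab n (Down # \<tau>) m'"
| path_sw: "path N lab n \<tau> m \<Longrightarrow> lab m = App m1 m2 \<Longrightarrow> path N lab n (SW # \<tau>) m1"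
| path_se: "path N lab n \<tau> m \<Longrightarrow> lab m = App m1 m2 \<Longrightarrow> path N lab n (SE # \<tau>) m2"

definition has_path :: "'n set \<Rightarrow> ('n \<Rightarrow> ('n, 'a) kind) \<Rightarrow> 'n \<Rightarrow> trace \<Rightarrow> bool" where
  "has_path N lab n \<tau> \<longleftrightarrow> (\<exists>m. path N lab n \<tau> m)"

fun crosses_aux :: "'n set \<Rightarrow> ('n \<Rightarrow> ('n, 'a) kind) \<Rightarrow> 'n \<Rightarrow> trace \<Rightarrow> 'n \<Rightarrow> bool" where
  "crosses_aux N lab n [] m \<longleftrightarrow> path N lab n [] m"
| "crosses_aux N lab n (d # \<tau>) m \<longleftrightarrow> path N lab n (d # \<tau>) m \<or> crosses_aux N lab n \<tau> m"

definition crosses :: "'n set \<Rightarrow> ('n \<Rightarrow> ('n, 'a) kind) \<Rightarrow> 'n \<Rightarrow> trace \<Rightarrow> 'n \<Rightarrow> bool" where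
  "crosses N lab n \<tau> m \<longleftrightarrow> has_path N lab n \<tau> \<and> crosses_aux N lab n \<tau> m"

definition is_abs :: "('n \<Rightarrow> ('n, 'a) kind) \<Rightarrow> 'n \<Rightarrow> bool" where
  "is_abs lab v \<longleftrightarrow> (\<exists>b. lab v = Abs b)"

definition is_root :: "'n set \<Rightarrow> ('n \<Rightarrow> ('n, 'a) kind) \<Rightarrow> 'n \<Rightarrow> bool" where
  "is_root N lab r \<longleftrightarrow> r \<in> N \<and> (\<forall>n \<tau>. path N lab n \<tau> r \<longrightarrow> \<tau> = [])"

definition dominates :: "'n set \<Rightarrow> ('n \<Rightarrow> ('n, 'a) kind) \<Rightarrow> 'n \<Rightarrow> 'n \<Rightarrow> bool" where
  "dominates N lab m n \<longleftrightarrow> (\<forall>r \<tau>. is_root N lab r \<and> path N lab r \<tau> n \<longrightarrow> crosses N lab r \<tau> m)"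

definition lambda_graph :: "'n set \<Rightarrow> ('n \<Rightarrow> ('n, 'a) kind) \<Rightarrow> bool" where
  "lambda_graph N lab \<longleftrightarrow> pre_lambda_graph N lab \<and> finite N \<and>
     (\<forall>n \<tau>. path N lab n \<tau> n \<longrightarrow> \<tau> = []) \<and>
     (\<forall>v\<in>N. \<forall>l. lab v = BVar l \<longrightarrow> dominates N lab l v)"

fun same_kind :: "('n, 'a) kind \<Rightarrow> ('n, 'a) kind \<Rightarrow> bool" where
  "same_kind (App _ _) (App _ _) = True"
| "same_kind (Abs _) (Abs _) = True"
| "same_kind (FVar _) (FVar _) = True"
| "same_kind (BVar _) (BVar _) = True"
| "same_kind _ _ = False"

definition homogeneous :: "('n \<Rightarrow> ('n, 'a) kind) \<Rightarrow> ('n \<times> 'n) set \<Rightarrow> bool" where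
  "homogeneous lab R \<longleftrightarrow> (\<forall>(n, m)\<in>R. same_kind (lab n) (lab m))"

definition propagated :: "('n \<Rightarrow> ('n, 'a) kind) \<Rightarrow> ('n \<times> 'n) set \<Rightarrow> bool" where
  "propagated lab R \<longleftrightarrow>
     (\<forall>n m n1 n2 m1 m2. (n, m) \<in> R \<and> lab n = App n1 n2 \<and> lab m = App m1 m2 \<longrightarrow>
        (n1, m1) \<in> R \<and> (n2, m2) \<in> R) \<and>
     (\<forall>n m b c. (n, m) \<in> R \<and> lab n = Abs b \<and> lab m = Abs c \<longrightarrow> (b, c) \<in> R)"

definition blind_bisim :: "'n set \<Rightarrow> ('n \<Rightarrow> ('n, 'a) kind) \<Rightarrow> ('n \<times> 'n) set \<Rightarrow> bool" where
  "blind_bisim N lab R \<longleftrightarrow> R \<subseteq> N \<times> N \<and> homogeneous lab R \<and> propagated lab R"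

fun idx :: "'n set \<Rightarrow> ('n \<Rightarrow> ('n, 'a) kind) \<Rightarrow> 'n \<Rightarrow> 'n \<Rightarrow> trace \<Rightarrow> nat" where
  "idx N lab l n [] = 0"
| "idx N lab l n (d # \<tau>) =
     (if path N lab n (d # \<tau>) l then 0
      else idx N lab l n \<tau> + (if \<exists>l'. path N lab n (d # \<tau>) l' \<and> is_abs lab l' then 1 else 0))"

end

theory Submission
  imports Defs
begin

lemma path_in: "path N lab u \<tau> w \<Longrightarrow> pre_lambda_graph N lab \<Longrightarrow> u \<in> N \<and> w \<in> N"
proof (induction rule: path.induct)
  case (path_eps n) then show ?case by simp
next
  case (path_down n \<tau> m m') then show ?case unfolding pre_lambda_graph_def by blast
next
  case (path_sw n \<tau> m m1 m2) then show ?case unfolding pre_lambda_graph_def by blast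
next
  case (path_se n \<tau> m m1 m2) then show ?case unfolding pre_lambda_graph_def by blast
qed

lemma path_nil: "path N lab u [] w \<longleftrightarrow> u \<in> N \<and> w = u"
  by (rule iffI, erule path.cases, auto intro: path_eps)

lemma path_cons_inv:
  "path N lab u (d # \<tau>) w \<Longrightarrow> \<exists>e. path N lab u \<tau> e \<and>
     ((d = Down \<and> lab e = Abs w) \<or> (d = SW \<and> (\<exists>x. lab e = App w x)) \<or> (d = SE \<and> (\<exists>x. lab e = App x w)))"
  by (erule path.cases) auto

lemma path_det: "path N lab u \<tau> w \<Longrightarrow> path N lab u \<tau> w' \<Longrightarrow> w = w'"
proof (induction arbitrary: w' rule: path.induct)
  case (path_eps n) then show ?case by (simp add: path_nil)
next
  case (path_down n \<tau> m m')
  from path_cons_inv[OF path_down.prems] obtain e where "path N lab n \<tau> e" "lab e = Abs w'" by auto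
  then show ?case using path_down.IH path_down.hyps(2) by simp
next
  case (path_sw n \<tau> m m1 m2)
  from path_cons_inv[OF path_sw.prems] obtain e x where "path N lab n \<tau> e" "lab e = App w' x" by auto
  then show ?case using path_sw.IH path_sw.hyps(2) by simp
next
  case (path_se n \<tau> m m1 m2)
  from path_cons_inv[OF path_se.prems] obtain e x where "path N lab n \<tau> e" "lab e = App x w'" by auto
  then show ?case using path_se.IH path_se.hyps(2) by simp
qed

lemma path_app: "path N lab e \<rho> x \<Longrightarrow> path N lab w \<sigma> e \<Longrightarrow> path N lab w (\<rho> @ \<sigma>) x"
proof (induction rule: path.induct)
  case (path_eps n) then show ?case by simp
next
  case (path_down n \<tau> m m') then show ?case using path.path_down by simp
next
  case (path_sw n \<tau> m m1 m2) then show ?case using path.path_sw by simp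
next
  case (path_se n \<tau> m m1 m2) then show ?case using path.path_se by simp
qed

lemma path_one: "path N lab u [d] u1 \<Longrightarrow> path N lab u1 [] w \<Longrightarrow> path N lab u [d] w"
  by (simp add: path_nil)

lemma path_front_aux:
  assumes pl: "pre_lambda_graph N lab"
  shows "path N lab u \<tau> w \<Longrightarrow> \<forall>\<sigma>. \<tau> = \<sigma> @ [d] \<longrightarrow> (\<exists>u1. path N lab u [d] u1 \<and> path N lab u1 \<sigma> w)"
proof (induction rule: path.induct)
  case (path_eps n) then show ?case by simp
next
  case (path_down n \<tau> m m')
  have pm: "path N lab n (Down # \<tau>) m'" using path.path_down[OF path_down.hyps] .
  have mN: "m' \<in> N" using path_in[OF pm pl] by simp
  show ?case
  proof (intro allI impI)
    fix \<sigma> assume e: "Down # \<tau> = \<sigma> @ [d]"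
    show "\<exists>u1. path N lab n [d] u1 \<and> path N lab u1 \<sigma> m'"
    proof (cases \<sigma>)
      case Nil
      then have "d = Down" "\<tau> = []" using e by auto
      then have "path N lab n [d] m'" using pm by simp
      moreover have "path N lab m' \<sigma> m'" using Nil mN path.path_eps by simp
      ultimately show ?thesis by blast
    next
      case (Cons a s)
      then have a: "a = Down" "\<tau> = s @ [d]" using e by auto
      obtain u1 where u1: "path N lab n [d] u1" "path N lab u1 s m" using path_down.IH[rule_format, OF a(2)] by blast
      have "path N lab u1 (Down # s) m'" using path.path_down[OF u1(2) path_down.hyps(2)] .
      then show ?thesis using u1(1) unfolding Cons a(1) by blast
    qed
  qed
next
  case (path_sw n \<tau> m m1 m2)
  have pm: "path N lab n (SW # \<tau>) m1" using path.path_sw[OF path_sw.hyps] .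
  have mN: "m1 \<in> N" using path_in[OF pm pl] by simp
  show ?case
  proof (intro allI impI)
    fix \<sigma> assume e: "SW # \<tau> = \<sigma> @ [d]"
    show "\<exists>u1. path N lab n [d] u1 \<and> path N lab u1 \<sigma> m1"
    proof (cases \<sigma>)
      case Nil
      then have "d = SW" "\<tau> = []" using e by auto
      then have "path N lab n [d] m1" using pm by simp
      moreover have "path N lab m1 \<sigma> m1" using Nil mN path.path_eps by simp
      ultimately show ?thesis by blast
    next
      case (Cons a s)
      then have a: "a = SW" "\<tau> = s @ [d]" using e by auto
      obtain u1 where u1: "path N lab n [d] u1" "path N lab u1 s m" using path_sw.IH[rule_format, OF a(2)] by blast
      have "path N lab u1 (SW # s) m1" using path.path_sw[OF u1(2) path_sw.hyps(2)] .
      then show ?thesis using u1(1) unfolding Cons a(1) by blast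
    qed
  qed
next
  case (path_se n \<tau> m m1 m2)
  have pm: "path N lab n (SE # \<tau>) m2" using path.path_se[OF path_se.hyps] .
  have mN: "m2 \<in> N" using path_in[OF pm pl] by simp
  show ?case
  proof (intro allI impI)
    fix \<sigma> assume e: "SE # \<tau> = \<sigma> @ [d]"
    show "\<exists>u1. path N lab n [d] u1 \<and> path N lab u1 \<sigma> m2"
    proof (cases \<sigma>)
      case Nil
      then have "d = SE" "\<tau> = []" using e by auto
      then have "path N lab n [d] m2" using pm by simp
      moreover have "path N lab m2 \<sigma> m2" using Nil mN path.path_eps by simp
      ultimately show ?thesis by blast
    next
      case (Cons a s)
      then have a: "a = SE" "\<tau> = s @ [d]" using e by auto
      obtain u1 where u1: "path N lab n [d] u1" "path N lab u1 s m" using path_se.IH[rule_format, OF a(2)] by blast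
      have "path N lab u1 (SE # s) m2" using path.path_se[OF u1(2) path_se.hyps(2)] .
      then show ?thesis using u1(1) unfolding Cons a(1) by blast
    qed
  qed
qed

lemma path_front:
  assumes "path N lab u (\<sigma> @ [d]) w" "pre_lambda_graph N lab"
  shows "\<exists>u1. path N lab u [d] u1 \<and> path N lab u1 \<sigma> w"
  using path_front_aux[OF assms(2) assms(1)] by blast

definition reach where "reach N lab u = {w. \<exists>\<sigma>. path N lab u \<sigma> w}"

lemma bound:
  assumes lg: "lambda_graph N lab"
  shows "\<forall>u w. path N lab u \<sigma> w \<longrightarrow> length \<sigma> < card (reach N lab u)"
proof -
  have pl: "pre_lambda_graph N lab" using lg unfolding lambda_graph_def by blast
  have fin: "finite N" using lg unfolding lambda_graph_def by blast
  have acyc: "\<forall>n \<tau>. path N lab n \<tau> n \<longrightarrow> \<tau> = []" using lg unfolding lambda_graph_def by blast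
  have sub: "reach N lab v \<subseteq> N" for v
  proof
    fix x assume "x \<in> reach N lab v"
    then obtain \<rho> where "path N lab v \<rho> x" unfolding reach_def by blast
    then show "x \<in> N" using path_in[OF _ pl] by blast
  qed
  have finr: "finite (reach N lab v)" for v using finite_subset[OF sub fin] .
  have selfr: "u \<in> reach N lab u" if "u \<in> N" for u
  proof -
    have "path N lab u [] u" using path.path_eps[OF that] .
    then show ?thesis unfolding reach_def by blast
  qed
  show ?thesis
  proof (induction \<sigma> rule: rev_induct)
    case Nil
    show ?case
    proof (intro allI impI)
      fix u w assume "path N lab u [] w"
      then have "u \<in> N" by (simp add: path_nil)
      then have "u \<in> reach N lab u" by (rule selfr)
      then have "reach N lab u \<noteq> {}" by blast
      then show "length [] < card (reach N lab u)" using finr[of u] by (simp add: card_gt_0_iff)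
    qed
  next
    case (snoc d s)
    show ?case
    proof (intro allI impI)
      fix u w assume p: "path N lab u (s @ [d]) w"
      obtain u1 where u1: "path N lab u [d] u1" "path N lab u1 s w"
        using path_front[OF p pl] by blast
      have "reach N lab u1 \<subseteq> reach N lab u"
      proof
        fix x assume "x \<in> reach N lab u1"
        then obtain \<rho> where "path N lab u1 \<rho> x" unfolding reach_def by blast
        then have "path N lab u (\<rho> @ [d]) x" by (rule path_app[OF _ u1(1)])
        then show "x \<in> reach N lab u" unfolding reach_def by blast
      qed
      moreover have "u \<in> reach N lab u"
      proof -
        have "u \<in> N" using path_in[OF p pl] by simp
        then show ?thesis by (rule selfr)
      qed
      moreover have "u \<notin> reach N lab u1"
      proof
        assume "u \<in> reach N lab u1"
        then obtain \<rho> where "path N lab u1 \<rho> u" unfolding reach_def by blast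
        then have "path N lab u (\<rho> @ [d]) u" by (rule path_app[OF _ u1(1)])
        then have "\<rho> @ [d] = []" using acyc by blast
        then show False by simp
      qed
      ultimately have "reach N lab u1 \<subset> reach N lab u" by blast
      then have "card (reach N lab u1) < card (reach N lab u)"
        by (rule psubset_card_mono[OF finr])
      moreover have "length s < card (reach N lab u1)" using snoc.IH u1(2) by blast
      ultimately show "length (s @ [d]) < card (reach N lab u)" by simp
    qed
  qed
qed

definition hgt where "hgt N lab u = Max (length ` {\<sigma>. has_path N lab u \<sigma>})"

lemma hgt_fin:
  assumes lg: "lambda_graph N lab"
  shows "finite (length ` {\<sigma>. has_path N lab u \<sigma>})"
proof -
  have pl: "pre_lambda_graph N lab" and fin: "finite N" using lg unfolding lambda_graph_def by blast+
  have "reach N lab u \<subseteq> N" using path_in[OF _ pl] unfolding reach_def by blast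
  then have "card (reach N lab u) \<le> card N" using fin card_mono by blast
  have "length ` {\<sigma>. has_path N lab u \<sigma>} \<subseteq> {..card N}"
  proof
    fix k assume "k \<in> length ` {\<sigma>. has_path N lab u \<sigma>}"
    then obtain \<sigma> w where k: "k = length \<sigma>" and p: "path N lab u \<sigma> w" unfolding has_path_def by blast
    have "length \<sigma> < card (reach N lab u)" using bound[OF lg, rule_format, OF p] .
    then show "k \<in> {..card N}" using k \<open>card (reach N lab u) \<le> card N\<close> by simp
  qed
  then show ?thesis using finite_subset by blast
qed

lemma hgt_strict:
  assumes lg: "lambda_graph N lab" and p: "path N lab w \<sigma> e" and ne: "\<sigma> \<noteq> []"
  shows "hgt N lab e < hgt N lab w"
proof -
  have pl: "pre_lambda_graph N lab" using lg unfolding lambda_graph_def by blast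
  have "e \<in> N" using path_in[OF p pl] by simp
  then have "path N lab e [] e" by (rule path.path_eps)
  then have "[] \<in> {\<sigma>. has_path N lab e \<sigma>}" unfolding has_path_def by blast
  then have "hgt N lab e \<in> length ` {\<sigma>. has_path N lab e \<sigma>}"
    unfolding hgt_def using hgt_fin[OF lg] by (intro Max_in) auto
  then obtain \<rho> where r: "has_path N lab e \<rho>" "length \<rho> = hgt N lab e" by auto
  then obtain x where "path N lab e \<rho> x" unfolding has_path_def by blast
  then have "path N lab w (\<rho> @ \<sigma>) x" using path_app[OF _ p] by blast
  then have "has_path N lab w (\<rho> @ \<sigma>)" unfolding has_path_def by blast
  then have "length (\<rho> @ \<sigma>) \<in> length ` {\<sigma>. has_path N lab w \<sigma>}" by blast
  then have "length (\<rho> @ \<sigma>) \<le> hgt N lab w"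
    unfolding hgt_def using Max_ge[OF hgt_fin[OF lg]] by blast
  then have "hgt N lab e + length \<sigma> \<le> hgt N lab w" using r by simp
  moreover have "length \<sigma> > 0" using ne by simp
  ultimately show ?thesis by linarith
qed

lemma R_N: "blind_bisim N lab R \<Longrightarrow> (u, v) \<in> R \<Longrightarrow> u \<in> N \<and> v \<in> N"
  unfolding blind_bisim_def by blast

lemma R_sk: "blind_bisim N lab R \<Longrightarrow> (u, v) \<in> R \<Longrightarrow> same_kind (lab u) (lab v)"
  unfolding blind_bisim_def homogeneous_def by blast

lemma R_abs: "blind_bisim N lab R \<Longrightarrow> (u, v) \<in> R \<Longrightarrow> lab u = Abs b \<Longrightarrow> lab v = Abs c \<Longrightarrow> (b, c) \<in> R"
  unfolding blind_bisim_def propagated_def by blast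

lemma R_app: "blind_bisim N lab R \<Longrightarrow> (u, v) \<in> R \<Longrightarrow> lab u = App a1 a2 \<Longrightarrow> lab v = App c1 c2 \<Longrightarrow> (a1, c1) \<in> R \<and> (a2, c2) \<in> R"
  unfolding blind_bisim_def propagated_def by blast

lemma sk_abs1: "same_kind (Abs b) k \<Longrightarrow> \<exists>c. k = Abs c" by (cases k) simp_all
lemma sk_abs2: "same_kind k (Abs b) \<Longrightarrow> \<exists>c. k = Abs c" by (cases k) simp_all
lemma sk_app1: "same_kind (App a b) k \<Longrightarrow> \<exists>c d. k = App c d" by (cases k) simp_all
lemma sk_app2: "same_kind k (App a b) \<Longrightarrow> \<exists>c d. k = App c d" by (cases k) simp_all

lemma bisim_fw:
  assumes bb: "blind_bisim N lab R"
  shows "path N lab u \<sigma> x \<Longrightarrow> (u, v) \<in> R \<Longrightarrow> \<exists>y. path N lab v \<sigma> y \<and> (x, y) \<in> R"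
proof (induction rule: path.induct)
  case (path_eps n)
  have vN: "v \<in> N" using R_N[OF bb path_eps.prems] by simp
  have "path N lab v [] v" using path.path_eps[OF vN] .
  then show ?case using path_eps.prems by blast
next
  case (path_down n \<tau> m m')
  obtain y where y1: "path N lab v \<tau> y" and y2: "(m, y) \<in> R" using path_down.IH[OF path_down.prems] by blast
  have sk: "same_kind (lab m) (lab y)" using R_sk[OF bb y2] .
  obtain c where c: "lab y = Abs c" using sk_abs1[OF sk[unfolded path_down.hyps(2)]] by blast
  have r: "(m', c) \<in> R" using R_abs[OF bb y2 path_down.hyps(2) c] .
  have "path N lab v (Down # \<tau>) c" using path.path_down[OF y1 c] .
  then show ?case using r by blast
next
  case (path_sw n \<tau> m m1 m2)
  obtain y where y1: "path N lab v \<tau> y" and y2: "(m, y) \<in> R" using path_sw.IH[OF path_sw.prems] by blast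
  have sk: "same_kind (lab m) (lab y)" using R_sk[OF bb y2] .
  obtain c1 c2 where c: "lab y = App c1 c2" using sk_app1[OF sk[unfolded path_sw.hyps(2)]] by blast
  have r: "(m1, c1) \<in> R" using R_app[OF bb y2 path_sw.hyps(2) c] by simp
  have "path N lab v (SW # \<tau>) c1" using path.path_sw[OF y1 c] .
  then show ?case using r by blast
next
  case (path_se n \<tau> m m1 m2)
  obtain y where y1: "path N lab v \<tau> y" and y2: "(m, y) \<in> R" using path_se.IH[OF path_se.prems] by blast
  have sk: "same_kind (lab m) (lab y)" using R_sk[OF bb y2] .
  obtain c1 c2 where c: "lab y = App c1 c2" using sk_app1[OF sk[unfolded path_se.hyps(2)]] by blast
  have r: "(m2, c2) \<in> R" using R_app[OF bb y2 path_se.hyps(2) c] by simp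
  have "path N lab v (SE # \<tau>) c2" using path.path_se[OF y1 c] .
  then show ?case using r by blast
qed

lemma bisim_bw:
  assumes bb: "blind_bisim N lab R"
  shows "path N lab v \<sigma> x \<Longrightarrow> (u, v) \<in> R \<Longrightarrow> \<exists>y. path N lab u \<sigma> y \<and> (y, x) \<in> R"
proof (induction rule: path.induct)
  case (path_eps n)
  have vN: "u \<in> N" using R_N[OF bb path_eps.prems] by simp
  have "path N lab u [] u" using path.path_eps[OF vN] .
  then show ?case using path_eps.prems by blast
next
  case (path_down n \<tau> m m')
  obtain y where y1: "path N lab u \<tau> y" and y2: "(y, m) \<in> R" using path_down.IH[OF path_down.prems] by blast
  have sk: "same_kind (lab y) (lab m)" using R_sk[OF bb y2] .
  obtain c where c: "lab y = Abs c" using sk_abs2[OF sk[unfolded path_down.hyps(2)]] by blast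
  have r: "(c, m') \<in> R" using R_abs[OF bb y2 c path_down.hyps(2)] .
  have "path N lab u (Down # \<tau>) c" using path.path_down[OF y1 c] .
  then show ?case using r by blast
next
  case (path_sw n \<tau> m m1 m2)
  obtain y where y1: "path N lab u \<tau> y" and y2: "(y, m) \<in> R" using path_sw.IH[OF path_sw.prems] by blast
  have sk: "same_kind (lab y) (lab m)" using R_sk[OF bb y2] .
  obtain c1 c2 where c: "lab y = App c1 c2" using sk_app2[OF sk[unfolded path_sw.hyps(2)]] by blast
  have r: "(c1, m1) \<in> R" using R_app[OF bb y2 c path_sw.hyps(2)] by simp
  have "path N lab u (SW # \<tau>) c1" using path.path_sw[OF y1 c] .
  then show ?case using r by blast
next
  case (path_se n \<tau> m m1 m2)
  obtain y where y1: "path N lab u \<tau> y" and y2: "(y, m) \<in> R" using path_se.IH[OF path_se.prems] by blast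
  have sk: "same_kind (lab y) (lab m)" using R_sk[OF bb y2] .
  obtain c1 c2 where c: "lab y = App c1 c2" using sk_app2[OF sk[unfolded path_se.hyps(2)]] by blast
  have r: "(c2, m2) \<in> R" using R_app[OF bb y2 c path_se.hyps(2)] by simp
  have "path N lab u (SE # \<tau>) c2" using path.path_se[OF y1 c] .
  then show ?case using r by blast
qed

lemma hgt_R:
  assumes bb: "blind_bisim N lab R" and "(u, v) \<in> R"
  shows "hgt N lab u = hgt N lab v"
proof -
  have "has_path N lab u \<sigma> \<longleftrightarrow> has_path N lab v \<sigma>" for \<sigma>
  proof
    assume "has_path N lab u \<sigma>"
    then obtain x where "path N lab u \<sigma> x" unfolding has_path_def by blast
    then obtain y where "path N lab v \<sigma> y" using bisim_fw[OF bb _ assms(2)] by blast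
    then show "has_path N lab v \<sigma>" unfolding has_path_def by blast
  next
    assume "has_path N lab v \<sigma>"
    then obtain y where "path N lab v \<sigma> y" unfolding has_path_def by blast
    then obtain x where "path N lab u \<sigma> x" using bisim_bw[OF bb _ assms(2)] by blast
    then show "has_path N lab u \<sigma>" unfolding has_path_def by blast
  qed
  then have "{\<sigma>. has_path N lab u \<sigma>} = {\<sigma>. has_path N lab v \<sigma>}" by blast
  then show ?thesis by (simp add: hgt_def)
qed

lemma step_exists:
  assumes s: "path N lab w \<sigma> e0"
    and h: "(d = Down \<and> lab e0 = Abs e) \<or> (d = SW \<and> (\<exists>x. lab e0 = App e x)) \<or> (d = SE \<and> (\<exists>x. lab e0 = App x e))"
  shows "path N lab w (d # \<sigma>) e"
proof -
  from h show ?thesis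
  proof (elim disjE conjE exE)
    assume "d = Down" "lab e0 = Abs e" then show ?thesis using path.path_down[OF s] by simp
  next
    fix x assume "d = SW" "lab e0 = App e x" then show ?thesis using path.path_sw[OF s] by simp
  next
    fix x assume "d = SE" "lab e0 = App x e" then show ?thesis using path.path_se[OF s] by simp
  qed
qed

lemma cross_reach:
  assumes pl: "pre_lambda_graph N lab"
  shows "crosses_aux N lab u \<tau> w \<Longrightarrow> path N lab u \<tau> e \<Longrightarrow> \<exists>\<sigma>. path N lab w \<sigma> e"
proof (induction \<tau> arbitrary: e)
  case Nil
  have "w = u" using Nil.prems(1) by (simp add: path_nil)
  moreover have "e = u" "u \<in> N" using Nil.prems(2) by (simp_all add: path_nil)
  ultimately have "path N lab w [] e" using path.path_eps[of u N lab] by simp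
  then show ?case by (rule exI)
next
  case (Cons d \<tau>)
  show ?case
  proof (cases "path N lab u (d # \<tau>) w")
    case True
    have we: "w = e" using path_det[OF True Cons.prems(2)] .
    have "e \<in> N" using path_in[OF Cons.prems(2) pl] by simp
    then have "path N lab w [] e" using path.path_eps[of e N lab] we by simp
    then show ?thesis by (rule exI)
  next
    case False
    then have c: "crosses_aux N lab u \<tau> w" using Cons.prems(1) by simp
    obtain e0 where e0: "path N lab u \<tau> e0"
      "(d = Down \<and> lab e0 = Abs e) \<or> (d = SW \<and> (\<exists>x. lab e0 = App e x)) \<or> (d = SE \<and> (\<exists>x. lab e0 = App x e))"
      using path_cons_inv[OF Cons.prems(2)] by blast
    obtain \<sigma> where s: "path N lab w \<sigma> e0" using Cons.IH[OF c e0(1)] by blast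
    have "path N lab w (d # \<sigma>) e" using step_exists[OF s e0(2)] .
    then show ?thesis by (rule exI)
  qed
qed

lemma cross_reach_strict:
  assumes pl: "pre_lambda_graph N lab" and c: "crosses_aux N lab u \<tau> w" and p: "path N lab u (d # \<tau>) e"
  shows "\<exists>\<sigma>. \<sigma> \<noteq> [] \<and> path N lab w \<sigma> e"
proof -
  obtain e0 where e0: "path N lab u \<tau> e0"
    "(d = Down \<and> lab e0 = Abs e) \<or> (d = SW \<and> (\<exists>x. lab e0 = App e x)) \<or> (d = SE \<and> (\<exists>x. lab e0 = App x e))"
    using path_cons_inv[OF p] by blast
  obtain \<sigma> where s: "path N lab w \<sigma> e0" using cross_reach[OF pl c e0(1)] by blast
  have "path N lab w (d # \<sigma>) e" using step_exists[OF s e0(2)] .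
  moreover have "d # \<sigma> \<noteq> []" by simp
  ultimately show ?thesis by blast
qed

lemma has_path_cons: "has_path N lab u (d # \<tau>) \<Longrightarrow> has_path N lab u \<tau>"
proof -
  assume "has_path N lab u (d # \<tau>)"
  then obtain w where w: "path N lab u (d # \<tau>) w" unfolding has_path_def by blast
  obtain e where "path N lab u \<tau> e" using path_cons_inv[OF w] by blast
  then show ?thesis unfolding has_path_def by blast
qed

lemma abs_end: "path N lab u \<tau> e \<Longrightarrow> (\<exists>x. path N lab u \<tau> x \<and> is_abs lab x) \<longleftrightarrow> is_abs lab e"
proof -
  assume p: "path N lab u \<tau> e"
  show ?thesis
  proof
    assume "\<exists>x. path N lab u \<tau> x \<and> is_abs lab x"
    then obtain x where px: "path N lab u \<tau> x" and ax: "is_abs lab x" by blast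
    have "e = x" by (rule path_det[OF p px])
    then show "is_abs lab e" using ax by simp
  next
    assume "is_abs lab e" then show "\<exists>x. path N lab u \<tau> x \<and> is_abs lab x" using p by blast
  qed
qed

lemma main_aux:
  assumes lg: "lambda_graph N lab" and bb: "blind_bisim N lab R"
  shows "(n, m) \<in> R \<Longrightarrow> has_path N lab n \<tau> \<Longrightarrow> has_path N lab m \<tau> \<Longrightarrow>
    crosses_aux N lab n \<tau> l \<Longrightarrow> crosses_aux N lab m \<tau> l' \<Longrightarrow> is_abs lab l \<Longrightarrow> is_abs lab l' \<Longrightarrow>
    ((l, l') \<in> R \<longleftrightarrow> idx N lab l n \<tau> = idx N lab l' m \<tau>)"
proof (induction \<tau> arbitrary: l l')
  case Nil
  then show ?case by (simp add: path_nil)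
next
  case (Cons d \<tau>)
  obtain en where pen: "path N lab n (d # \<tau>) en" using Cons.prems(2) unfolding has_path_def by blast
  obtain em where pem: "path N lab m (d # \<tau>) em" and R1: "(en, em) \<in> R"
    using bisim_fw[OF bb pen Cons.prems(1)] by blast
  have hn: "has_path N lab n \<tau>" and hm: "has_path N lab m \<tau>"
    using has_path_cons[OF Cons.prems(2)] has_path_cons[OF Cons.prems(3)] by auto
  have sk: "same_kind (lab en) (lab em)" using R_sk[OF bb R1] .
  have abseq: "is_abs lab en \<longleftrightarrow> is_abs lab em" using sk
    by (cases "lab en"; cases "lab em") (auto simp: is_abs_def)
  have an: "(\<exists>x. path N lab n (d # \<tau>) x \<and> is_abs lab x) \<longleftrightarrow> is_abs lab en" using abs_end[OF pen] .
  have am: "(\<exists>x. path N lab m (d # \<tau>) x \<and> is_abs lab x) \<longleftrightarrow> is_abs lab em" using abs_end[OF pem] .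
  have pl: "pre_lambda_graph N lab" using lg unfolding lambda_graph_def by blast
  show ?case
  proof (cases "path N lab n (d # \<tau>) l")
    case T1: True
    have l: "l = en" using path_det[OF T1 pen] by simp
    show ?thesis
    proof (cases "path N lab m (d # \<tau>) l'")
      case True
      have "l' = em" using path_det[OF True pem] by simp
      then show ?thesis using T1 True l R1 by simp
    next
      case False
      then have c: "crosses_aux N lab m \<tau> l'" using Cons.prems(5) by simp
      have "idx N lab l' m (d # \<tau>) \<noteq> 0" using False am abseq l Cons.prems(6) by simp
      moreover have "idx N lab l n (d # \<tau>) = 0" using T1 by simp
      moreover have "(l, l') \<notin> R"
      proof
        assume "(l, l') \<in> R"
        then have "hgt N lab l = hgt N lab l'" by (rule hgt_R[OF bb])
        moreover obtain \<sigma> where s1: "\<sigma> \<noteq> []" and s2: "path N lab l' \<sigma> em" using cross_reach_strict[OF pl c pem] by blast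
        have "hgt N lab em < hgt N lab l'" by (rule hgt_strict[OF lg s2 s1])
        moreover have "hgt N lab en = hgt N lab em" using hgt_R[OF bb R1] .
        ultimately show False unfolding l by linarith
      qed
      ultimately show ?thesis by simp
    qed
  next
    case F1: False
    then have c1: "crosses_aux N lab n \<tau> l" using Cons.prems(4) by simp
    show ?thesis
    proof (cases "path N lab m (d # \<tau>) l'")
      case True
      have l': "l' = em" using path_det[OF True pem] by simp
      have "idx N lab l n (d # \<tau>) \<noteq> 0" using F1 an abseq l' Cons.prems(7) by simp
      moreover have "idx N lab l' m (d # \<tau>) = 0" using True by simp
      moreover have "(l, l') \<notin> R"
      proof
        assume "(l, l') \<in> R"
        then have "hgt N lab l = hgt N lab l'" by (rule hgt_R[OF bb])
        moreover obtain \<sigma> where s1: "\<sigma> \<noteq> []" and s2: "path N lab l \<sigma> en" using cross_reach_strict[OF pl c1 pen] by blast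
        have "hgt N lab en < hgt N lab l" by (rule hgt_strict[OF lg s2 s1])
        moreover have "hgt N lab en = hgt N lab em" using hgt_R[OF bb R1] .
        ultimately show False unfolding l' by linarith
      qed
      ultimately show ?thesis by simp
    next
      case False
      then have c2: "crosses_aux N lab m \<tau> l'" using Cons.prems(5) by simp
      have IH: "(l, l') \<in> R \<longleftrightarrow> idx N lab l n \<tau> = idx N lab l' m \<tau>"
        using Cons.IH[OF Cons.prems(1) hn hm c1 c2 Cons.prems(6,7)] .
      have "idx N lab l n (d # \<tau>) = idx N lab l n \<tau> + (if is_abs lab en then 1 else 0)"
        using F1 an by simp
      moreover have "idx N lab l' m (d # \<tau>) = idx N lab l' m \<tau> + (if is_abs lab en then 1 else 0)"
        using False am abseq by simp
      ultimately show ?thesis using IH by simp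
    qed
  qed
qed

theorem mainTheorem18:
  fixes N :: "'n set" and lab :: "'n \<Rightarrow> ('n, 'a) kind" and R :: "('n \<times> 'n) set"
  assumes "lambda_graph N lab"
    and "blind_bisim N lab R"
    and "(n, m) \<in> R"
    and "crosses N lab n \<tau> l" and "is_abs lab l"
    and "crosses N lab m \<tau> l'" and "is_abs lab l'"
  shows "(l, l') \<in> R \<longleftrightarrow> idx N lab l n \<tau> = idx N lab l' m \<tau>"
proof -
  have a: "has_path N lab n \<tau>" "crosses_aux N lab n \<tau> l" using assms(4) unfolding crosses_def by simp_all
  have b: "has_path N lab m \<tau>" "crosses_aux N lab m \<tau> l'" using assms(6) unfolding crosses_def by simp_all
  show ?thesis by (rule main_aux[OF assms(1,2,3) a(1) b(1) a(2) b(2) assms(5) assms(7)])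
qed

end
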